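(* For every $x\in\mathbb R$, $|e^{ix}-1-ix-(ix)^2/2|\le\varkappa x^2$, where $\varkappa=x^{-2}\sqrt{(\cos x-1+x^2/2)^2+(\sin x-x)^2}\big|_{x=x_0}=0.531551\ldots$ and $x_0=5.487414\ldots$ is the unique root of $8(\cos x-1)+8x\sin x-4x^2\cos x-x^3\sin x=0$ on $(0,2\pi]$, which lies in $(\pi,2\pi)$. *)

theory Defs
  imports Complex_Main
begin

definition lemma3_g :: "real \<Rightarrow> real" where
  "lemma3_g x = 8 * (cos x - 1) + 8 * x * sin x - 4 * x^2 * cos x - x^3 * sin x"

definition lemma3_x0 :: real where
  "lemma3_x0 = (THE x. 0 < x \<and> x \<le> 2 * pi \<and> lemma3_g x = 0)"

definition lemma3_kappa :: real where
  "lemma3_kappa = (let x = lemma3_x0 in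
     sqrt ((cos x - 1 + x^2 / 2)^2 + (sin x - x)^2) / x^2)"

end

theory Submission
  imports Defs "HOL-Analysis.Complex_Transcendental"
begin

definition phi :: "real \<Rightarrow> real" where "phi x = sin x - x * cos x"
definition FF :: "real \<Rightarrow> real" where "FF x = (cos x - 1 + x^2/2)^2 + (sin x - x)^2"

lemma phi_deriv: "(phi has_real_derivative x * sin x) (at x)"
  unfolding phi_def[abs_def] by (auto intro!: derivative_eq_intros simp: algebra_simps)

lemma g_deriv: "(lemma3_g has_real_derivative x^2 * phi x) (at x)"
  unfolding lemma3_g_def[abs_def] phi_def
  by (auto intro!: derivative_eq_intros simp: algebra_simps eval_nat_numeral)

lemma FF_expand: "FF x = x^4/4 + x^2 * cos x - 2 * x * sin x + 2 - 2* cos x"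
proof -
  have "sin x ^ 2 = 1 - cos x ^ 2" by (simp add: sin_squared_eq)
  then show ?thesis unfolding FF_def by (simp add: power2_eq_square algebra_simps eval_nat_numeral)
qed

lemma H_deriv: assumes "x \<noteq> 0"
  shows "((\<lambda>x. FF x / x^4) has_real_derivative lemma3_g x / x^5) (at x)"
proof -
  have e: "(\<lambda>x. FF x / x^4) = (\<lambda>x. (x^4/4 + x^2 * cos x - 2 * x * sin x + 2 - 2* cos x) / x^4)"
    by (simp add: FF_expand)
  show ?thesis unfolding e lemma3_g_def using assms
    by (auto intro!: derivative_eq_intros simp: field_simps eval_nat_numeral)
qed

lemma phi_cont: "continuous_on S phi" unfolding phi_def by (intro continuous_intros)
lemma g_cont: "continuous_on S lemma3_g" unfolding lemma3_g_def[abs_def] by (intro continuous_intros)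

lemma phi_pos: assumes "0 < x" "x \<le> pi" shows "0 < phi x"
proof -
  have "phi 0 < phi x"
  proof (rule DERIV_pos_imp_increasing_open[OF assms(1) _ phi_cont])
    fix y assume y: "0 < y" "y < x"
    then have "0 < y * sin y" using assms sin_gt_zero[of y] by simp
    then show "\<exists>d. (phi has_real_derivative d) (at y) \<and> 0 < d" using phi_deriv by blast
  qed
  then show ?thesis by (simp add: phi_def)
qed

lemma phi_dec: assumes "pi \<le> u" "u < v" "v \<le> 2*pi" shows "phi v < phi u"
  by (rule DERIV_neg_imp_decreasing_open[OF assms(2) _ phi_cont])
     (use assms phi_deriv sin_lt_zero pi_gt_zero in \<open>force intro!: mult_pos_neg\<close>)

lemma g_inc: assumes "0 \<le> u" "u < v" "\<And>y. u < y \<Longrightarrow> y < v \<Longrightarrow> 0 < phi y"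
  shows "lemma3_g u < lemma3_g v"
  by (rule DERIV_pos_imp_increasing_open[OF assms(2) _ g_cont])
     (use assms g_deriv in force)

lemma g_dec: assumes "0 \<le> u" "u < v" "\<And>y. u < y \<Longrightarrow> y < v \<Longrightarrow> phi y < 0"
  shows "lemma3_g v < lemma3_g u"
  by (rule DERIV_neg_imp_decreasing_open[OF assms(2) _ g_cont])
     (use assms g_deriv in \<open>force intro!: mult_pos_neg\<close>)

lemma g_zero: "lemma3_g 0 = 0" by (simp add: lemma3_g_def)
lemma g_2pi: "lemma3_g (2*pi) < 0" by (simp add: lemma3_g_def)

lemma g_root: "\<exists>z. pi < z \<and> z < 2*pi \<and> lemma3_g z = 0 \<and> (\<forall>x. 0<x \<longrightarrow> x<z \<longrightarrow> lemma3_g x > 0)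
   \<and> (\<forall>x. z<x \<longrightarrow> x \<le> 2*pi \<longrightarrow> lemma3_g x < 0)"
proof -
  have "phi (2*pi) \<le> 0" "0 \<le> phi pi" by (simp_all add: phi_def)
  from IVT2'[OF this _ phi_cont] obtain r where r: "pi \<le> r" "r \<le> 2*pi" "phi r = 0" by auto
  have "r \<noteq> pi" using r pi_gt_zero by (auto simp add: phi_def)
  have "r \<noteq> 2*pi" using r pi_gt_zero by (auto simp add: phi_def)
  have rp: "pi < r" "r < 2*pi" using r \<open>r \<noteq> pi\<close> \<open>r \<noteq> 2*pi\<close> by auto
  have ppos: "0 < phi y" if "0 < y" "y < r" for y
  proof (cases "y \<le> pi")
    case True then show ?thesis using phi_pos that by auto
  next
    case False then show ?thesis using phi_dec[of y r] that rp r by auto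
  qed
  have pneg: "phi y < 0" if "r < y" "y \<le> 2*pi" for y
    using phi_dec[of r y] that rp r by auto
  have ginc: "lemma3_g u < lemma3_g v" if "0 \<le> u" "u < v" "v \<le> r" for u v
    by (rule g_inc) (use that ppos in auto)
  have gdec: "lemma3_g v < lemma3_g u" if "r \<le> u" "u < v" "v \<le> 2*pi" for u v
    by (rule g_dec) (use that pneg pi_gt_zero rp in auto)
  have gr: "0 < lemma3_g r" using ginc[of 0 r] rp pi_gt_zero g_zero by auto
  have "lemma3_g (2*pi) \<le> 0" "0 \<le> lemma3_g r" using g_2pi gr by auto
  from IVT2'[OF this _ g_cont] rp obtain z where z: "r \<le> z" "z \<le> 2*pi" "lemma3_g z = 0" by auto
  have zr: "r < z" using z gr by (cases "r = z") auto
  have z2: "z < 2*pi" using z g_2pi by (cases "z = 2*pi") auto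
  show ?thesis
  proof (intro exI[of _ z] conjI allI impI)
    show "pi < z" "z < 2*pi" "lemma3_g z = 0" using zr rp z2 z by auto
    fix x assume x: "0 < x" "x < z"
    show "0 < lemma3_g x"
    proof (cases "x \<le> r")
      case True then show ?thesis using ginc[of 0 x] g_zero x by auto
    next
      case False then show ?thesis using gdec[of x z] x z by auto
    qed
  next
    fix x assume x: "z < x" "x \<le> 2*pi"
    show "lemma3_g x < 0" using gdec[of z x] x z zr by auto
  qed
qed

lemma sin_bounds:
  fixes x :: real assumes x: "0 \<le> x" "x \<le> 1"
  shows "(\<Sum>k<2*n. (-1)^k * (x^(2*k+1)/fact(2*k+1))) \<le> sin x"
    and "sin x \<le> (\<Sum>k<2*n+1. (-1)^k * (x^(2*k+1)/fact(2*k+1)))"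
proof -
  define a where "a k = x^(2*k+1)/fact(2*k+1)" for k
  have s: "(\<lambda>k. (-1)^k * a k) sums sin x"
    using sin_paired[of x] by (simp add: a_def)
  have "(\<lambda>k. (-1)^k * a k) \<longlonglongrightarrow> 0"
    using summable_LIMSEQ_zero[OF sums_summable[OF s]] .
  then have "(\<lambda>k. \<bar>(-1)^k * a k\<bar>) \<longlonglongrightarrow> 0" by (rule tendsto_rabs_zero)
  moreover have "\<bar>(-1)^k * a k\<bar> = a k" for k using x by (simp add: a_def abs_mult)
  ultimately have z: "a \<longlonglongrightarrow> 0" by simp
  have p: "0 \<le> a k" for k using x by (simp add: a_def)
  have m: "a (Suc k) \<le> a k" for k
  proof -
    have "x^(2*Suc k+1) = x^(2*k+1) * x^2" by (simp add: power_add[symmetric])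
    also have "\<dots> \<le> x^(2*k+1)" using x by (simp add: mult_left_le power_le_one)
    finally have 1: "x^(2*Suc k+1) \<le> x^(2*k+1)" .
    have 2: "fact(2*k+1) \<le> (fact(2*Suc k+1)::real)" by (rule fact_mono) simp
    show ?thesis unfolding a_def
      by (rule frac_le) (use x 1 2 in auto)
  qed
  have e: "(\<Sum>i. (-1)^i * a i) = sin x" using s by (simp add: sums_iff)
  show "(\<Sum>k<2*n. (-1)^k * (x^(2*k+1)/fact(2*k+1))) \<le> sin x"
    using summable_Leibniz'(2)[OF z p m, of n] e by (simp add: a_def)
  show "sin x \<le> (\<Sum>k<2*n+1. (-1)^k * (x^(2*k+1)/fact(2*k+1)))"
    using summable_Leibniz'(4)[OF z p m, of n] e by (simp add: a_def)
qed

lemma cos_bounds: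
  fixes x :: real assumes x: "0 \<le> x" "x \<le> 1"
  shows "(\<Sum>k<2*n. (-1)^k * (x^(2*k)/fact(2*k))) \<le> cos x"
    and "cos x \<le> (\<Sum>k<2*n+1. (-1)^k * (x^(2*k)/fact(2*k)))"
proof -
  define a where "a k = x^(2*k)/fact(2*k)" for k
  have s: "(\<lambda>k. (-1)^k * a k) sums cos x"
    using cos_paired[of x] by (simp add: a_def)
  have "(\<lambda>k. (-1)^k * a k) \<longlonglongrightarrow> 0"
    using summable_LIMSEQ_zero[OF sums_summable[OF s]] .
  then have "(\<lambda>k. \<bar>(-1)^k * a k\<bar>) \<longlonglongrightarrow> 0" by (rule tendsto_rabs_zero)
  moreover have "\<bar>(-1)^k * a k\<bar> = a k" for k using x by (simp add: a_def abs_mult)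
  ultimately have z: "a \<longlonglongrightarrow> 0" by simp
  have p: "0 \<le> a k" for k using x by (simp add: a_def)
  have m: "a (Suc k) \<le> a k" for k
  proof -
    have "x^(2*Suc k) = x^(2*k) * x^2" by (simp add: power_add[symmetric])
    also have "\<dots> \<le> x^(2*k)" using x by (simp add: mult_left_le power_le_one)
    finally have 1: "x^(2*Suc k) \<le> x^(2*k)" .
    have 2: "fact(2*k) \<le> (fact(2*Suc k)::real)" by (rule fact_mono) simp
    show ?thesis unfolding a_def
      by (rule frac_le) (use x 1 2 in auto)
  qed
  have e: "(\<Sum>i. (-1)^i * a i) = cos x" using s by (simp add: sums_iff)
  show "(\<Sum>k<2*n. (-1)^k * (x^(2*k)/fact(2*k))) \<le> cos x"
    using summable_Leibniz'(2)[OF z p m, of n] e by (simp add: a_def)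
  show "cos x \<le> (\<Sum>k<2*n+1. (-1)^k * (x^(2*k)/fact(2*k)))"
    using summable_Leibniz'(4)[OF z p m, of n] e by (simp add: a_def)
qed


definition slo :: "real \<Rightarrow> real" where "slo x = x - x^3/6 + x^5/120 - x^7/5040 + x^9/362880 - x^11/39916800"
definition shi :: "real \<Rightarrow> real" where "shi x = x - x^3/6 + x^5/120 - x^7/5040 + x^9/362880 - x^11/39916800 + x^13/6227020800"
definition clo :: "real \<Rightarrow> real" where "clo x = 1 - x^2/2 + x^4/24 - x^6/720 + x^8/40320 - x^10/3628800"
definition chi :: "real \<Rightarrow> real" where "chi x = 1 - x^2/2 + x^4/24 - x^6/720 + x^8/40320 - x^10/3628800 + x^12/479001600"

lemma encl: assumes "T1 \<le> t" "t \<le> T2" "0 \<le> T1" "T2 \<le> 1"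
  shows "slo T1 \<le> sin t" "sin t \<le> shi T2" "clo T2 \<le> cos t" "cos t \<le> chi T1"
proof -
  have p: "3 < pi" using pi_gt3 .
  have "slo T1 \<le> sin T1" using sin_bounds(1)[of T1 3] assms by (simp add: slo_def eval_nat_numeral)
  also have "sin T1 \<le> sin t" by (rule sin_monotone_2pi_le) (use assms p in auto)
  finally show "slo T1 \<le> sin t" .
  have "sin t \<le> sin T2" by (rule sin_monotone_2pi_le) (use assms p in auto)
  also have "sin T2 \<le> shi T2" using sin_bounds(2)[of T2 3] assms by (simp add: shi_def eval_nat_numeral)
  finally show "sin t \<le> shi T2" .
  have "clo T2 \<le> cos T2" using cos_bounds(1)[of T2 3] assms by (simp add: clo_def eval_nat_numeral)
  also have "cos T2 \<le> cos t" by (rule cos_monotone_0_pi_le) (use assms p in auto)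
  finally show "clo T2 \<le> cos t" .
  have "cos t \<le> cos T1" by (rule cos_monotone_0_pi_le) (use assms p in auto)
  also have "cos T1 \<le> chi T1" using cos_bounds(2)[of T1 3] assms by (simp add: chi_def eval_nat_numeral)
  finally show "cos t \<le> chi T1" .
qed

lemma g_t: "lemma3_g x = (8 - 4*x^2) * cos (2*pi - x) + (x^3 - 8*x) * sin (2*pi - x) - 8"
  by (simp add: lemma3_g_def sin_diff cos_diff algebra_simps)

lemma FF_t: "FF x = x^4/4 + (x^2 - 2) * cos (2*pi - x) + 2 * x * sin (2*pi - x) + 2"
  by (simp add: FF_expand sin_diff cos_diff algebra_simps)

lemma ta: "0.79577130 \<le> 2*pi - 5.487414" "2*pi - 5.487414 \<le> (0.79577131::real)"
  using pi_approx by simp_all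
lemma tb: "0.79577030 \<le> 2*pi - 5.487415" "2*pi - 5.487415 \<le> (0.79577031::real)"
  using pi_approx by simp_all

lemma n1: "(0.714403522173::real) \<le> slo 0.79577130" by (simp add: slo_def power_divide field_simps)
lemma n2: "chi 0.79577130 \<le> (0.699733954797::real)" by (simp add: chi_def power_divide field_simps)
lemma n3: "shi 0.79577131 \<le> (0.714403529179::real)" by (simp add: shi_def power_divide field_simps)
lemma n4: "(0.699733947517::real) \<le> clo 0.79577131" by (simp add: clo_def power_divide field_simps)
lemma n5: "(0.699734661921::real) \<le> clo 0.79577031" by (simp add: clo_def power_divide field_simps)
lemma n6: "shi 0.79577031 \<le> (0.714402829445::real)" by (simp add: shi_def power_divide field_simps)

lemma ga: "0 < lemma3_g 5.487414"
proof -
  define t :: real where "t = 2*pi - 5.487414"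
  have e1: "sin t \<ge> 0.714403522173" using encl(1)[OF ta[folded t_def]] n1 by simp
  have e2: "cos t \<le> 0.699733954797" using encl(4)[OF ta[folded t_def]] n2 by simp
  have "(8 - 4*5.487414^2) * cos t \<ge> (8 - 4*5.487414^2) * (0.699733954797::real)"
    by (rule mult_left_mono_neg) (use e2 in \<open>simp_all add: power_divide\<close>)
  moreover have "(5.487414^3 - 8*5.487414) * sin t \<ge> (5.487414^3 - 8*5.487414) * (0.714403522173::real)"
    by (rule mult_left_mono) (use e1 in \<open>simp_all add: power_divide\<close>)
  moreover have "0 < (8 - 4*5.487414^2) * (0.699733954797::real) + (5.487414^3 - 8*5.487414) * 0.714403522173 - 8"
    by (simp add: power_divide field_simps)
  ultimately show ?thesis unfolding g_t t_def[symmetric] by linarith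
qed

lemma gb: "lemma3_g 5.487415 < 0"
proof -
  define t :: real where "t = 2*pi - 5.487415"
  have e1: "sin t \<le> 0.714402829445" using encl(2)[OF tb[folded t_def]] n6 by simp
  have e2: "cos t \<ge> 0.699734661921" using encl(3)[OF tb[folded t_def]] n5 by simp
  have "(8 - 4*5.487415^2) * cos t \<le> (8 - 4*5.487415^2) * (0.699734661921::real)"
    by (rule mult_left_mono_neg) (use e2 in \<open>simp_all add: power_divide\<close>)
  moreover have "(5.487415^3 - 8*5.487415) * sin t \<le> (5.487415^3 - 8*5.487415) * (0.714402829445::real)"
    by (rule mult_left_mono) (use e1 in \<open>simp_all add: power_divide\<close>)
  moreover have "(8 - 4*5.487415^2) * (0.699734661921::real) + (5.487415^3 - 8*5.487415) * 0.714402829445 - 8 < 0"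
    by (simp add: power_divide field_simps)
  ultimately show ?thesis unfolding g_t t_def[symmetric] by linarith
qed

lemma FFa: "0.531551^2 * 5.487414^4 \<le> FF 5.487414" "FF 5.487414 \<le> (0.531552^2 - 0.00000009) * (5.487414::real)^4"
proof -
  define t :: real where "t = 2*pi - 5.487414"
  have e1: "sin t \<ge> 0.714403522173" using encl(1)[OF ta[folded t_def]] n1 by simp
  have e2: "cos t \<le> 0.699733954797" using encl(4)[OF ta[folded t_def]] n2 by simp
  have e3: "sin t \<le> 0.714403529179" using encl(2)[OF ta[folded t_def]] n3 by simp
  have e4: "cos t \<ge> 0.699733947517" using encl(3)[OF ta[folded t_def]] n4 by simp
  have "(5.487414^2 - 2) * cos t \<ge> (5.487414^2 - 2) * (0.699733947517::real)"
    by (rule mult_left_mono) (use e4 in \<open>simp_all add: power_divide\<close>)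
  moreover have "(5.487414^2 - 2) * cos t \<le> (5.487414^2 - 2) * (0.699733954797::real)"
    by (rule mult_left_mono) (use e2 in \<open>simp_all add: power_divide\<close>)
  moreover have "0.531551^2 * 5.487414^4 \<le> 5.487414^4/4 + (5.487414^2 - 2) * (0.699733947517::real) + 2 * 5.487414 * 0.714403522173 + 2"
    by (simp add: power_divide field_simps)
  moreover have "5.487414^4/4 + (5.487414^2 - 2) * (0.699733954797::real) + 2 * 5.487414 * 0.714403529179 + 2 \<le> (0.531552^2 - 0.00000009) * 5.487414^4"
    by (simp add: power_divide field_simps)
  moreover have "2 * 5.487414 * sin t \<ge> 2 * 5.487414 * (0.714403522173::real)"
    by (rule mult_left_mono) (use e1 in \<open>simp_all add: power_divide\<close>)
  moreover have "2 * 5.487414 * sin t \<le> 2 * 5.487414 * (0.714403529179::real)"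
    by (rule mult_left_mono) (use e3 in \<open>simp_all add: power_divide\<close>)
  note facts = calculation this
  show "0.531551^2 * 5.487414^4 \<le> FF 5.487414"
    unfolding FF_t t_def[symmetric] using facts by linarith
  show "FF 5.487414 \<le> (0.531552^2 - 0.00000009) * (5.487414::real)^4"
    unfolding FF_t t_def[symmetric] using facts by linarith
qed

lemma FF_even: "FF (-x) = FF x"
  by (simp add: FF_def power2_eq_square algebra_simps)

lemma FF_big: assumes x: "2*pi \<le> x" and K: "0.2825 \<le> K" shows "FF x \<le> K * x^4"
proof -
  have x6: "6 \<le> x" using x pi_gt3 by linarith
  have x2: "36 \<le> x^2" using power_mono[OF x6, of 2] by simp
  have id0: "((x^2-2) * cos x - 2*x * sin x)^2 + ((x^2-2) * sin x + 2*x * cos x)^2 = (x^4 + 4) * (sin x ^2 + cos x ^2)"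
    by algebra
  have id: "((x^2-2) * cos x - 2*x * sin x)^2 + ((x^2-2) * sin x + 2*x * cos x)^2 = x^4 + 4"
    unfolding id0 by simp
  have "((x^2-2) * cos x - 2*x * sin x)^2 \<le> x^4 + 4"
    using id by (metis le_add_same_cancel1 zero_le_power2)
  also have "\<dots> \<le> (x^2 + 2)^2" by (simp add: power2_eq_square eval_nat_numeral algebra_simps)
  finally have "(x^2-2) * cos x - 2*x * sin x \<le> x^2 + 2"
    by (rule power2_le_imp_le) simp
  then have F: "FF x \<le> x^4/4 + x^2 + 4" unfolding FF_expand by (simp add: algebra_simps)
  have e: "x^4 = x^2 * x^2" by (simp add: eval_nat_numeral)
  have K': "13/400 \<le> K - 1/4" using K by simp
  have "(K - 1/4) * (x^2 * x^2) \<ge> 13/400 * (x^2 * x^2)"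
    by (rule mult_right_mono) (use K' in auto)
  moreover have "13/400 * (x^2 * x^2) \<ge> 13/400 * (36 * x^2)"
    by (intro mult_left_mono mult_right_mono) (use x2 in auto)
  ultimately have "(K - 1/4) * x^4 \<ge> x^2 + 4" unfolding e using x2 by linarith
  then show ?thesis using F by (simp add: algebra_simps)
qed

lemma cmod_FF: "cmod (exp (\<i> * of_real x) - 1 - \<i> * of_real x - (\<i> * of_real x)^2 / 2) = sqrt (FF x)"
  by (simp add: norm_complex_def FF_def Re_exp Im_exp power2_eq_square)


theorem lemma3:
  shows "(\<exists>!x. 0 < x \<and> x \<le> 2 * pi \<and> lemma3_g x = 0)
    \<and> pi < lemma3_x0 \<and> lemma3_x0 < 2 * pi
    \<and> 5.487414 \<le> lemma3_x0 \<and> lemma3_x0 < 5.487415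
    \<and> 0.531551 \<le> lemma3_kappa \<and> lemma3_kappa < 0.531552
    \<and> (\<forall>x::real. cmod (exp (\<i> * of_real x) - 1 - \<i> * of_real x - (\<i> * of_real x)^2 / 2)
           \<le> lemma3_kappa * x^2)"
proof -
  obtain z where z: "pi < z" "z < 2*pi" "lemma3_g z = 0"
    and gpos: "\<And>x. 0<x \<Longrightarrow> x<z \<Longrightarrow> lemma3_g x > 0"
    and gneg: "\<And>x. z<x \<Longrightarrow> x \<le> 2*pi \<Longrightarrow> lemma3_g x < 0"
    using g_root by blast
  have z0: "0 < z" using z pi_gt_zero by linarith
  have uniq: "\<exists>!x. 0 < x \<and> x \<le> 2 * pi \<and> lemma3_g x = 0"
  proof (rule ex1I[of _ z])
    show "0 < z \<and> z \<le> 2 * pi \<and> lemma3_g z = 0" using z z0 by auto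
    fix y assume y: "0 < y \<and> y \<le> 2 * pi \<and> lemma3_g y = 0"
    show "y = z"
    proof (rule ccontr)
      assume "y \<noteq> z"
      then consider "y < z" | "z < y" by linarith
      then show False using gpos[of y] gneg[of y] y by cases auto
    qed
  qed
  have x0: "lemma3_x0 = z" unfolding lemma3_x0_def
    by (rule the1_equality[OF uniq]) (use z z0 in auto)
  have p6: "6 < 2*pi" using pi_gt3 by linarith
  have za: "5.487414 < z"
  proof (rule ccontr)
    assume "\<not> 5.487414 < z"
    then consider "z = 5.487414" | "z < 5.487414" by linarith
    then show False
    proof cases
      case 1 then show False using ga z(3) unfolding 1[symmetric] by simp
    next
      case 2
      have "(5.487414::real) \<le> 6" by simp
      then have "5.487414 \<le> 2*pi" using p6 by linarith
      then show False using gneg[of "5.487414"] ga 2 by linarith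
    qed
  qed
  have zb: "z < 5.487415"
  proof (rule ccontr)
    assume "\<not> z < 5.487415"
    then consider "z = 5.487415" | "5.487415 < z" by linarith
    then show False
    proof cases
      case 1 then show False using gb z(3) unfolding 1[symmetric] by simp
    next
      case 2
      have "(0::real) < 5.487415" by simp
      then show False using gpos[of "5.487415"] gb 2 by linarith
    qed
  qed
  define K where "K = FF z / z^4"
  have z4: "sqrt (z^4) = z^2"
  proof -
    have "sqrt (z^4) = sqrt ((z^2)^2)" by simp
    also have "\<dots> = \<bar>z^2\<bar>" by (rule real_sqrt_abs)
    finally show ?thesis by simp
  qed
  have kap: "lemma3_kappa = sqrt K"
    unfolding lemma3_kappa_def Let_def x0 K_def FF_def real_sqrt_divide z4 ..
  have Hinc: "FF x / x^4 \<le> K" if "0 < x" "x \<le> z" for x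
    unfolding K_def
  proof (rule DERIV_nonneg_imp_nondecreasing[OF that(2)])
    fix y assume y: "x \<le> y" "y \<le> z"
    have "0 \<le> lemma3_g y" using gpos[of y] z y that by (cases "y = z") auto
    then have "0 \<le> lemma3_g y / y^5" using y that by simp
    then show "\<exists>d. ((\<lambda>x. FF x / x^4) has_real_derivative d) (at y) \<and> 0 \<le> d"
      using H_deriv[of y] y that by auto
  qed
  have Hdec: "FF x / x^4 \<le> K" if "z \<le> x" "x \<le> 2*pi" for x
    unfolding K_def
  proof (rule DERIV_nonpos_imp_nonincreasing[OF that(1)])
    fix y assume y: "z \<le> y" "y \<le> x"
    have "lemma3_g y \<le> 0" using gneg[of y] z y that by (cases "y = z") auto
    then have "lemma3_g y / y^5 \<le> 0" using y z0 by (simp add: divide_nonpos_pos)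
    then show "\<exists>d. ((\<lambda>x. FF x / x^4) has_real_derivative d) (at y) \<and> d \<le> 0"
      using H_deriv[of y] y z0 by auto
  qed
  have Ha: "FF 5.487414 / 5.487414^4 \<le> K" by (rule Hinc) (use za in auto)
  have Klo: "0.531551^2 \<le> K"
  proof -
    have "0.531551^2 \<le> FF 5.487414 / (5.487414::real)^4"
      using FFa(1) by (simp add: pos_le_divide_eq)
    then show ?thesis using Ha by linarith
  qed
  have Khi: "K < 0.531552^2"
  proof -
    define a :: real where "a = 5.487414"
    have a54: "(27/5) \<le> a" unfolding a_def by simp
    have za': "a < z" using za unfolding a_def .
    have zb': "z - a \<le> 0.000001" using zb unfolding a_def by simp
    have der: "((\<lambda>x. FF x / x^4) has_real_derivative lemma3_g x / x^5) (at x)" if x: "a \<le> x" "x \<le> z" for x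
    proof -
      have "x \<noteq> 0" using a54 x by linarith
      then show ?thesis by (rule H_deriv)
    qed
    have ex: "\<exists>xi. a < xi \<and> xi < z \<and> FF z / z^4 - FF a / a^4 = (z - a) * (lemma3_g xi / xi^5)"
      using MVT2[OF za' der] by simp
    then obtain xi where xi: "a < xi" "xi < z"
      and mvt: "FF z / z^4 - FF a / a^4 = (z - a) * (lemma3_g xi / xi^5)" by auto
    have "z < (11/2)" using zb by simp
    then have xi55: "xi \<le> (11/2)" using xi by linarith
    have xi54: "(27/5) \<le> xi" using xi a54 by linarith
    have xi0: "0 \<le> xi" using xi54 by simp
    have gb1: "lemma3_g xi \<le> 16 + 8*xi + 4*xi^2 + xi^3"
    proof -
      have t1: "8 * (cos xi - 1) \<le> 0" by simp
      have t2: "8 * xi * sin xi \<le> 8 * xi" using xi0 by (simp add: mult_left_le)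
      have "- cos xi \<le> 1" using cos_ge_minus_one[of xi] by linarith
      then have "4*xi^2 * (- cos xi) \<le> 4*xi^2 * 1" by (rule mult_left_mono) simp
      then have t3: "- (4 * xi^2 * cos xi) \<le> 4 * xi^2" by (simp only: mult_minus_right mult_1_right)
      have "xi^3 * (- sin xi) \<le> xi^3 * 1" by (rule mult_left_mono) (use xi0 in auto)
      then have t4: "- (xi^3 * sin xi) \<le> xi^3" by simp
      have gen: "\<And>A B C D b c d::real. A \<le> 0 \<Longrightarrow> B \<le> b \<Longrightarrow> -C \<le> c \<Longrightarrow> -D \<le> d \<Longrightarrow> A + B - C - D \<le> 16 + b + c + d"
        by linarith
      show ?thesis unfolding lemma3_g_def by (rule gen[OF t1 t2 t3 t4])
    qed
    have p2: "xi^2 \<le> (11/2)^2" by (rule power_mono[OF xi55 xi0])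
    have p3: "xi^3 \<le> (11/2)^3" by (rule power_mono[OF xi55 xi0])
    have p5: "(27/5)^5 \<le> xi^5" by (rule power_mono[OF xi54]) simp
    have num: "16 + 8*(11/2) + 4*(11/2)^2 + (11/2)^3 \<le> (2/25) * ((27/5)::real)^5" by (simp add: power_divide)
    have gb2: "lemma3_g xi \<le> (2/25) * xi^5"
    proof -
      have "\<And>G X X2 X3 X5 A B C D. G \<le> 16 + 8*X + 4*X2 + X3 \<Longrightarrow> X \<le> A \<Longrightarrow> X2 \<le> B \<Longrightarrow> X3 \<le> C
         \<Longrightarrow> D \<le> X5 \<Longrightarrow> 16 + 8*A + 4*B + C \<le> (2/25) * D \<Longrightarrow> G \<le> (2/25) * (X5::real)"
        by linarith
      from this[OF gb1 xi55 p2 p3 p5 num] show ?thesis .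
    qed
    have xi5: "0 < xi^5" using xi54 by simp
    have "lemma3_g xi / xi^5 \<le> (2/25)" using gb2 xi5 by (simp add: pos_divide_le_eq)
    then have m1: "(z - a) * (lemma3_g xi / xi^5) \<le> (z - a) * (2/25)"
      using za' by (intro mult_left_mono) auto
    have m2: "(z - a) * (2/25) \<le> 0.000001 * (2/25)"
      by (rule mult_right_mono[OF zb']) simp
    have ha: "FF a / a^4 \<le> 0.531552^2 - 0.00000009"
    proof (rule pos_divide_le_eq[THEN iffD2])
      show "0 < a^4" using a54 by simp
      show "FF a \<le> (0.531552^2 - 0.00000009) * a^4" using FFa(2)[folded a_def] .
    qed
    have fin: "\<And>K A M P Q R c. K - A = M \<Longrightarrow> M \<le> P \<Longrightarrow> P \<le> Q \<Longrightarrow> A \<le> c - R \<Longrightarrow> Q < R \<Longrightarrow> K < (c::real)"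
      by linarith
    have q: "(0.000001::real) * (2/25) < 0.00000009" by simp
    show ?thesis unfolding K_def by (rule fin[OF mvt m1 m2 ha q])
  qed
  have main: "FF x \<le> K * x^4" for x
  proof -
    have pos: "FF x \<le> K * x^4" if "0 < x" for x
    proof -
      consider "x \<le> z" | "z < x" "x \<le> 2*pi" | "2*pi < x" by linarith
      then show ?thesis
      proof cases
        case 1 then show ?thesis using Hinc[of x] that by (simp add: pos_divide_le_eq)
      next
        case 2 then show ?thesis using Hdec[of x] that by (simp add: pos_divide_le_eq)
      next
        case 3
        have "(0.2825::real) \<le> 0.531551^2" by (simp add: power_divide)
        then have "0.2825 \<le> K" using Klo by (rule order.trans)
        then show ?thesis using FF_big[of x K] 3 by simp
      qed
    qed
    consider "0 < x" | "x = 0" | "x < 0" by linarith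
    then show ?thesis
    proof cases
      case 1 then show ?thesis using pos by simp
    next
      case 2 then show ?thesis by (simp add: FF_def)
    next
      case 3 then show ?thesis using pos[of "-x"] FF_even[of x] by simp
    qed
  qed
  have ineq: "cmod (exp (\<i> * of_real x) - 1 - \<i> * of_real x - (\<i> * of_real x)^2 / 2)
           \<le> lemma3_kappa * x^2" for x :: real
  proof -
    have "sqrt (FF x) \<le> sqrt (K * x^4)" using main[of x] by simp
    also have "sqrt (K * x^4) = sqrt K * x^2"
    proof -
      have "sqrt (x^4) = sqrt ((x^2)^2)" by simp
      also have "\<dots> = \<bar>x^2\<bar>" by (rule real_sqrt_abs)
      finally show ?thesis by (simp add: real_sqrt_mult)
    qed
    finally show ?thesis unfolding cmod_FF kap .
  qed
  have k1: "0.531551 \<le> lemma3_kappa" unfolding kap by (rule real_le_rsqrt) (rule Klo)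
  have k2: "lemma3_kappa < 0.531552" unfolding kap by (rule real_less_lsqrt) (use Khi in auto)
  show ?thesis unfolding x0 using uniq z za zb k1 k2 ineq by (intro conjI) (simp_all add: less_imp_le)
qed

end
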